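(* Let $V$ be a finite set, let $\mathbb{F}$ be a field, let $A$ be a $V\times V$-matrix over $\mathbb{F}$, and let $Z\subseteq V$ be such that $A[Z,Z]$ is nonsingular. Then $p(A) = p(A*Z)$, where for a $V\times V$-matrix $B$ the nullity polynomial is $p(B) = \sum_{X,Y\subseteq V} y^{\,n(B[X,Y])}$ (a polynomial in the indeterminate $y$).
   Context: A $V\times V$-matrix over $\mathbb{F}$ is a function $V\times V\to\mathbb{F}$. For $X,Y\subseteq V$, $B[X,Y]$ denotes the restriction of $B$ to $X\times Y$, viewed as a linear map $\mathbb{F}^Y\to\mathbb{F}^X$, and $n(\cdot)$ denotes its nullity (dimension of its null space in $\mathbb{F}^Y$); the sum ranges over all pairs of subsets, including empty ones. For $Z\subseteq V$ with $A[Z,Z]$ nonsingular, the principal pivot transform $A*Z$ is the $V\times V$-matrix given blockwise (with $\bar Z=V\setminus Z$) by $(A*Z)[Z,Z]=A[Z,Z]^{-1}$, $(A*Z)[Z,\bar Z]=-A[Z,Z]^{-1}A[Z,\bar Z]$, $(A*Z)[\bar Z,Z]=A[\bar Z,Z]A[Z,Z]^{-1}$, $(A*Z)[\bar Z,\bar Z]=A[\bar Z,\bar Z]-A[\bar Z,Z]A[Z,Z]^{-1}A[Z,\bar Z]$. *)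

theory Defs
  imports Main "HOL-Library.Function_Algebras" "HOL-Computational_Algebra.Polynomial"
begin

text \<open>A V x V matrix over a field is represented as a function of two arguments
  'v => 'v => 'a; only its values on V x V matter.
  Vectors in F^Y are functions 'v => 'a vanishing outside Y.\<close>

definition fscale :: "'a::field \<Rightarrow> ('v \<Rightarrow> 'a) \<Rightarrow> ('v \<Rightarrow> 'a)" where
  "fscale c f = (\<lambda>x. c * f x)"

lemma vector_space_fscale: "vector_space (fscale :: 'a::field \<Rightarrow> ('v \<Rightarrow> 'a) \<Rightarrow> _)"
  by unfold_locales (auto simp: fscale_def algebra_simps)

definition null_space :: "('v \<Rightarrow> 'v \<Rightarrow> 'a::field) \<Rightarrow> 'v set \<Rightarrow> 'v set \<Rightarrow> ('v \<Rightarrow> 'a) set" where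
  "null_space B X Y = {x. (\<forall>j. j \<notin> Y \<longrightarrow> x j = 0) \<and> (\<forall>i\<in>X. (\<Sum>j\<in>Y. B i j * x j) = 0)}"

definition nullity :: "('v \<Rightarrow> 'v \<Rightarrow> 'a::field) \<Rightarrow> 'v set \<Rightarrow> 'v set \<Rightarrow> nat" where
  "nullity B X Y = vector_space.dim fscale (null_space B X Y)"

definition nullity_poly :: "'v set \<Rightarrow> ('v \<Rightarrow> 'v \<Rightarrow> 'a::field) \<Rightarrow> nat poly" where
  "nullity_poly V B = (\<Sum>X\<in>Pow V. \<Sum>Y\<in>Pow V. monom 1 (nullity B X Y))"

definition is_inverse_on :: "'v set \<Rightarrow> ('v \<Rightarrow> 'v \<Rightarrow> 'a::field) \<Rightarrow> ('v \<Rightarrow> 'v \<Rightarrow> 'a) \<Rightarrow> bool" where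
  "is_inverse_on Z A B \<longleftrightarrow>
     (\<forall>i\<in>Z. \<forall>k\<in>Z. (\<Sum>j\<in>Z. A i j * B j k) = (if i = k then 1 else 0)) \<and>
     (\<forall>i\<in>Z. \<forall>k\<in>Z. (\<Sum>j\<in>Z. B i j * A j k) = (if i = k then 1 else 0))"

definition nonsingular_on :: "'v set \<Rightarrow> ('v \<Rightarrow> 'v \<Rightarrow> 'a::field) \<Rightarrow> bool" where
  "nonsingular_on Z A \<longleftrightarrow> (\<exists>B. is_inverse_on Z A B)"

definition inverse_on :: "'v set \<Rightarrow> ('v \<Rightarrow> 'v \<Rightarrow> 'a::field) \<Rightarrow> ('v \<Rightarrow> 'v \<Rightarrow> 'a)" where
  "inverse_on Z A = (SOME B. is_inverse_on Z A B)"

text \<open>Principal pivot transform A*Z (entries outside V x V are set to 0).\<close>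
definition ppt :: "'v set \<Rightarrow> ('v \<Rightarrow> 'v \<Rightarrow> 'a::field) \<Rightarrow> 'v set \<Rightarrow> ('v \<Rightarrow> 'v \<Rightarrow> 'a)" where
  "ppt V A Z = (let Ai = inverse_on Z A; Zb = V - Z in (\<lambda>i j.
     if i \<in> Z \<and> j \<in> Z then Ai i j
     else if i \<in> Z \<and> j \<in> Zb then - (\<Sum>k\<in>Z. Ai i k * A k j)
     else if i \<in> Zb \<and> j \<in> Z then (\<Sum>k\<in>Z. A i k * Ai k j)
     else if i \<in> Zb \<and> j \<in> Zb then A i j - (\<Sum>k\<in>Z. \<Sum>l\<in>Z. A i k * Ai k l * A l j)
     else 0))"

end

theory Submission imports Defs begin

definition mv :: "'v set \<Rightarrow> ('v\<Rightarrow>'v\<Rightarrow>'a::field) \<Rightarrow> ('v\<Rightarrow>'a) \<Rightarrow> 'v \<Rightarrow> 'a" where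
  "mv V B x i = (\<Sum>j\<in>V. B i j * x j)"

lemma sum_split: "finite V \<Longrightarrow> Z \<subseteq> V \<Longrightarrow> sum f V = sum f Z + sum f (V - Z)"
  by (metis add.commute sum.subset_diff)

lemma delta_sum:
  assumes "finite Z" "i \<in> Z" "\<And>l. l \<in> Z \<Longrightarrow> c l = (if i = l then 1 else 0)"
  shows "(\<Sum>l\<in>Z. c l * (x l::'a::field)) = x i"
proof -
  have "(\<Sum>l\<in>Z. c l * x l) = (\<Sum>l\<in>Z. (if i = l then x l else 0))"
    by (rule sum.cong) (auto simp: assms(3))
  then show ?thesis using assms(1,2) by simp
qed

lemma sw1:
  fixes Ai A :: "'v \<Rightarrow> 'v \<Rightarrow> 'a::field"
  assumes fin: "finite Z" and inv: "\<forall>i\<in>Z. \<forall>k\<in>Z. (\<Sum>j\<in>Z. Ai i j * A j k) = (if i = k then 1 else 0)"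
    and i: "i \<in> Z"
  shows "(\<Sum>j\<in>Z. Ai i j * ((\<Sum>l\<in>Z. A j l * x l) + (\<Sum>l\<in>W. A j l * x l)))
       + (\<Sum>j\<in>W. (- (\<Sum>k\<in>Z. Ai i k * A k j)) * x j) = x i"
proof -
  have 1: "(\<Sum>j\<in>Z. Ai i j * (\<Sum>l\<in>Z. A j l * x l)) = (\<Sum>l\<in>Z. (\<Sum>j\<in>Z. Ai i j * A j l) * x l)"
    apply (simp add: sum_distrib_left sum_distrib_right mult.assoc)
    by (rule sum.swap)
  have 2: "(\<Sum>l\<in>Z. (\<Sum>j\<in>Z. Ai i j * A j l) * x l) = x i"
    by (rule delta_sum[OF fin i]) (use inv i in auto)
  have 3: "(\<Sum>j\<in>Z. Ai i j * (\<Sum>l\<in>W. A j l * x l)) = (\<Sum>l\<in>W. (\<Sum>j\<in>Z. Ai i j * A j l) * x l)"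
    apply (simp add: sum_distrib_left sum_distrib_right mult.assoc)
    by (rule sum.swap)
  show ?thesis using 1 2 3 by (simp add: distrib_left sum.distrib sum_negf)
qed


lemma swap3: "(\<Sum>j\<in>J. \<Sum>k\<in>K. \<Sum>l\<in>L. f j k l) = (\<Sum>l\<in>L. \<Sum>k\<in>K. \<Sum>j\<in>J. (f j k l :: 'a::comm_monoid_add))"
proof -
  have "(\<Sum>j\<in>J. \<Sum>k\<in>K. \<Sum>l\<in>L. f j k l) = (\<Sum>j\<in>J. \<Sum>l\<in>L. \<Sum>k\<in>K. f j k l)"
    by (rule sum.cong[OF refl], rule sum.swap)
  also have "\<dots> = (\<Sum>l\<in>L. \<Sum>j\<in>J. \<Sum>k\<in>K. f j k l)" by (rule sum.swap)
  also have "\<dots> = (\<Sum>l\<in>L. \<Sum>k\<in>K. \<Sum>j\<in>J. f j k l)"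
    by (rule sum.cong[OF refl], rule sum.swap)
  finally show ?thesis .
qed

definition swp :: "'v set \<Rightarrow> ('v\<Rightarrow>'v\<Rightarrow>'a::field) \<Rightarrow> 'v set \<Rightarrow> ('v\<Rightarrow>'a) \<Rightarrow> ('v\<Rightarrow>'a)" where
  "swp V A Z x = (\<lambda>i. if i \<in> Z then mv V A x i else x i)"

context
  fixes V Z :: "'v set" and A :: "'v \<Rightarrow> 'v \<Rightarrow> 'a::field"
  assumes finV: "finite V" and ZV: "Z \<subseteq> V" and inv: "is_inverse_on Z A (inverse_on Z A)"
begin

lemma finZ: "finite Z" using finV ZV finite_subset by blast

lemma invL: "i \<in> Z \<Longrightarrow> k \<in> Z \<Longrightarrow> (\<Sum>j\<in>Z. inverse_on Z A i j * A j k) = (if i = k then 1 else 0)"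
  using inv unfolding is_inverse_on_def by blast
lemma invR: "i \<in> Z \<Longrightarrow> k \<in> Z \<Longrightarrow> (\<Sum>j\<in>Z. A i j * inverse_on Z A j k) = (if i = k then 1 else 0)"
  using inv unfolding is_inverse_on_def by blast

lemma P_ZZ: "i \<in> Z \<Longrightarrow> j \<in> Z \<Longrightarrow> ppt V A Z i j = inverse_on Z A i j"
  by (simp add: ppt_def Let_def)
lemma P_ZW: "i \<in> Z \<Longrightarrow> j \<in> V - Z \<Longrightarrow> ppt V A Z i j = - (\<Sum>k\<in>Z. inverse_on Z A i k * A k j)"
  by (simp add: ppt_def Let_def)
lemma P_WZ: "i \<in> V \<Longrightarrow> i \<notin> Z \<Longrightarrow> j \<in> Z \<Longrightarrow> ppt V A Z i j = (\<Sum>k\<in>Z. A i k * inverse_on Z A k j)"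
  by (simp add: ppt_def Let_def)
lemma P_WW: "i \<in> V \<Longrightarrow> i \<notin> Z \<Longrightarrow> j \<in> V \<Longrightarrow> j \<notin> Z \<Longrightarrow> ppt V A Z i j =
   A i j - (\<Sum>k\<in>Z. \<Sum>l\<in>Z. A i k * inverse_on Z A k l * A l j)"
  by (simp add: ppt_def Let_def)

lemma mv_split: "mv V B x i = (\<Sum>j\<in>Z. B i j * x j) + (\<Sum>j\<in>V - Z. B i j * x j)"
  unfolding mv_def by (rule sum_split[OF finV ZV])

lemma AiA_x: "k \<in> Z \<Longrightarrow> (\<Sum>j\<in>Z. inverse_on Z A k j * (\<Sum>l\<in>Z. A j l * x l)) = x k"
proof -
  assume k: "k \<in> Z"
  have "(\<Sum>j\<in>Z. inverse_on Z A k j * (\<Sum>l\<in>Z. A j l * x l)) = (\<Sum>l\<in>Z. (\<Sum>j\<in>Z. inverse_on Z A k j * A j l) * x l)"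
    apply (simp add: sum_distrib_left sum_distrib_right mult.assoc)
    by (rule sum.swap)
  also have "\<dots> = x k"
    by (rule delta_sum[OF finZ k]) (use invL k in auto)
  finally show ?thesis .
qed

lemma key1:
  assumes xV: "\<forall>j. j \<notin> V \<longrightarrow> x j = 0" and iV: "i \<in> V"
  shows "mv V (ppt V A Z) (swp V A Z x) i = (if i \<in> Z then x i else mv V A x i)"
proof (cases "i \<in> Z")
  case True
  have "mv V (ppt V A Z) (swp V A Z x) i =
     (\<Sum>j\<in>Z. inverse_on Z A i j * ((\<Sum>l\<in>Z. A j l * x l) + (\<Sum>l\<in>V - Z. A j l * x l)))
       + (\<Sum>j\<in>V - Z. (- (\<Sum>k\<in>Z. inverse_on Z A i k * A k j)) * x j)"
    unfolding mv_split[of "ppt V A Z"]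
    by (intro arg_cong2[where f="(+)"] sum.cong refl)
       (auto simp: P_ZZ P_ZW True swp_def mv_split)
  also have "\<dots> = x i"
    by (rule sw1[OF finZ _ True]) (use invL in auto)
  finally show ?thesis using True by simp
next
  case False
  let ?Ai = "inverse_on Z A"
  have iW: "i \<in> V - Z" using False iV by auto
  have "mv V (ppt V A Z) (swp V A Z x) i =
     (\<Sum>j\<in>Z. (\<Sum>k\<in>Z. A i k * ?Ai k j) * ((\<Sum>l\<in>Z. A j l * x l) + (\<Sum>l\<in>V - Z. A j l * x l)))
       + (\<Sum>j\<in>V - Z. (A i j - (\<Sum>k\<in>Z. \<Sum>l\<in>Z. A i k * ?Ai k l * A l j)) * x j)"
  proof -
    have e1: "ppt V A Z i j * swp V A Z x j = (\<Sum>k\<in>Z. A i k * ?Ai k j) * ((\<Sum>l\<in>Z. A j l * x l) + (\<Sum>l\<in>V - Z. A j l * x l))"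
      if j: "j \<in> Z" for j
      using j by (simp only: P_WZ[OF iV False j] swp_def mv_split if_True)
    have e2: "ppt V A Z i j * swp V A Z x j = (A i j - (\<Sum>k\<in>Z. \<Sum>l\<in>Z. A i k * ?Ai k l * A l j)) * x j"
      if j: "j \<in> V - Z" for j
    proof -
      have "j \<in> V" "j \<notin> Z" using j by auto
      then show ?thesis using P_WW[OF iV False] by (simp add: swp_def)
    qed
    show ?thesis
      unfolding mv_split[of "ppt V A Z"]
      by (intro arg_cong2[where f="(+)"] sum.cong refl) (simp_all only: e1 e2)
  qed
  also have "\<dots> = mv V A x i"
  proof -
    have a: "(\<Sum>j\<in>Z. (\<Sum>k\<in>Z. A i k * ?Ai k j) * (\<Sum>l\<in>Z. A j l * x l)) = (\<Sum>k\<in>Z. A i k * x k)"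
    proof -
      have "(\<Sum>j\<in>Z. (\<Sum>k\<in>Z. A i k * ?Ai k j) * (\<Sum>l\<in>Z. A j l * x l))
          = (\<Sum>k\<in>Z. A i k * (\<Sum>j\<in>Z. ?Ai k j * (\<Sum>l\<in>Z. A j l * x l)))"
      proof -
        have "(\<Sum>j\<in>Z. (\<Sum>k\<in>Z. A i k * ?Ai k j) * (\<Sum>l\<in>Z. A j l * x l))
           = (\<Sum>j\<in>Z. \<Sum>k\<in>Z. A i k * (?Ai k j * (\<Sum>l\<in>Z. A j l * x l)))"
          by (simp only: sum_distrib_right mult.assoc)
        also have "\<dots> = (\<Sum>k\<in>Z. \<Sum>j\<in>Z. A i k * (?Ai k j * (\<Sum>l\<in>Z. A j l * x l)))"
          by (rule sum.swap)
        also have "\<dots> = (\<Sum>k\<in>Z. A i k * (\<Sum>j\<in>Z. ?Ai k j * (\<Sum>l\<in>Z. A j l * x l)))"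
          by (simp only: sum_distrib_left)
        finally show ?thesis .
      qed
      also have "\<dots> = (\<Sum>k\<in>Z. A i k * x k)"
      proof (rule sum.cong[OF refl])
        fix k assume k: "k \<in> Z"
        show "A i k * (\<Sum>j\<in>Z. ?Ai k j * (\<Sum>l\<in>Z. A j l * x l)) = A i k * x k"
          using AiA_x[OF k, of x] by (rule arg_cong)
      qed
      finally show ?thesis .
    qed
    have b1: "(\<Sum>j\<in>Z. (\<Sum>k\<in>Z. A i k * ?Ai k j) * (\<Sum>l\<in>V - Z. A j l * x l))
       = (\<Sum>j\<in>Z. \<Sum>k\<in>Z. \<Sum>l\<in>V - Z. A i k * ?Ai k j * A j l * x l)"
      apply (simp only: sum_distrib_right sum_distrib_left mult.assoc)
      by (rule sum.cong[OF refl], rule sum.swap)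
    have b2: "(\<Sum>j\<in>V - Z. (\<Sum>k\<in>Z. \<Sum>l\<in>Z. A i k * ?Ai k l * A l j) * x j)
       = (\<Sum>l\<in>V - Z. \<Sum>k\<in>Z. \<Sum>j\<in>Z. A i k * ?Ai k j * A j l * x l)"
      by (simp only: sum_distrib_right sum_distrib_left mult.assoc)
    have b: "(\<Sum>j\<in>Z. (\<Sum>k\<in>Z. A i k * ?Ai k j) * (\<Sum>l\<in>V - Z. A j l * x l))
       = (\<Sum>j\<in>V - Z. (\<Sum>k\<in>Z. \<Sum>l\<in>Z. A i k * ?Ai k l * A l j) * x j)"
      unfolding b1 b2 by (rule swap3)
    have c1: "(\<Sum>j\<in>Z. (\<Sum>k\<in>Z. A i k * ?Ai k j) * ((\<Sum>l\<in>Z. A j l * x l) + (\<Sum>l\<in>V - Z. A j l * x l)))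
       = (\<Sum>j\<in>Z. (\<Sum>k\<in>Z. A i k * ?Ai k j) * (\<Sum>l\<in>Z. A j l * x l))
       + (\<Sum>j\<in>Z. (\<Sum>k\<in>Z. A i k * ?Ai k j) * (\<Sum>l\<in>V - Z. A j l * x l))"
      by (simp only: distrib_left sum.distrib)
    have c2: "(\<Sum>j\<in>V - Z. (A i j - (\<Sum>k\<in>Z. \<Sum>l\<in>Z. A i k * ?Ai k l * A l j)) * x j)
       = (\<Sum>j\<in>V - Z. A i j * x j) - (\<Sum>j\<in>V - Z. (\<Sum>k\<in>Z. \<Sum>l\<in>Z. A i k * ?Ai k l * A l j) * x j)"
      by (simp only: left_diff_distrib sum_subtractf)
    show ?thesis
      unfolding mv_split[of A] c1 c2 a b by simp
  qed
  finally show ?thesis using False by simp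
qed

lemma key2:
  assumes xV: "\<forall>j. j \<notin> V \<longrightarrow> x' j = 0" and iZ: "i \<in> Z"
  shows "mv V A (\<lambda>j. if j \<in> Z then mv V (ppt V A Z) x' j else x' j) i = x' i"
proof -
  let ?Ai = "inverse_on Z A"
  have "mv V A (\<lambda>j. if j \<in> Z then mv V (ppt V A Z) x' j else x' j) i =
     (\<Sum>j\<in>Z. A i j * ((\<Sum>l\<in>Z. ?Ai j l * x' l) + (\<Sum>l\<in>V - Z. (- (\<Sum>k\<in>Z. ?Ai j k * A k l)) * x' l)))
     + (\<Sum>j\<in>V - Z. A i j * x' j)"
    unfolding mv_split[of A]
    by (intro arg_cong2[where f="(+)"] sum.cong refl)
       (simp_all add: P_ZZ P_ZW mv_split[of "ppt V A Z"])
  also have "\<dots> = x' i"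
  proof -
    have a: "(\<Sum>j\<in>Z. A i j * (\<Sum>l\<in>Z. ?Ai j l * x' l)) = x' i"
    proof -
      have "(\<Sum>j\<in>Z. A i j * (\<Sum>l\<in>Z. ?Ai j l * x' l)) = (\<Sum>l\<in>Z. (\<Sum>j\<in>Z. A i j * ?Ai j l) * x' l)"
        apply (simp add: sum_distrib_left sum_distrib_right mult.assoc)
        by (rule sum.swap)
      also have "\<dots> = x' i"
        by (rule delta_sum[OF finZ iZ]) (use invR iZ in auto)
      finally show ?thesis .
    qed
    have b1: "(\<Sum>j\<in>Z. A i j * (\<Sum>l\<in>V - Z. (- (\<Sum>k\<in>Z. ?Ai j k * A k l)) * x' l))
      = - (\<Sum>j\<in>Z. \<Sum>k\<in>Z. \<Sum>l\<in>V - Z. A i j * ?Ai j k * (A k l * x' l))"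
      apply (simp add: sum_distrib_right sum_distrib_left mult_ac sum_negf)
      by (rule sum.cong[OF refl], rule sum.swap)
    have b2: "(\<Sum>j\<in>Z. \<Sum>k\<in>Z. \<Sum>l\<in>V - Z. A i j * ?Ai j k * (A k l * x' l))
      = (\<Sum>l\<in>V - Z. \<Sum>k\<in>Z. (\<Sum>j\<in>Z. A i j * ?Ai j k) * (A k l * x' l))"
      by (subst swap3) (simp add: sum_distrib_right)
    have b3: "(\<Sum>l\<in>V - Z. \<Sum>k\<in>Z. (\<Sum>j\<in>Z. A i j * ?Ai j k) * (A k l * x' l)) = (\<Sum>l\<in>V - Z. A i l * x' l)"
      by (rule sum.cong[OF refl], rule delta_sum[OF finZ iZ]) (use invR iZ in auto)
    show ?thesis using a b1 b2 b3
      by (simp add: distrib_left sum.distrib)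
  qed
  finally show ?thesis .
qed


lemma sum_supp:
  assumes "Y \<subseteq> V" "\<forall>j. j \<notin> Y \<longrightarrow> x j = 0"
  shows "(\<Sum>j\<in>Y. B i j * x j) = mv V B x i"
  unfolding mv_def by (rule sum.mono_neutral_left) (use finV assms in auto)

lemma ns_iff:
  assumes "Y \<subseteq> V"
  shows "x \<in> null_space B X Y \<longleftrightarrow> (\<forall>j. j \<notin> Y \<longrightarrow> x j = 0) \<and> (\<forall>i\<in>X. mv V B x i = 0)"
proof -
  have eq: "\<forall>j. j \<notin> Y \<longrightarrow> x j = 0 \<Longrightarrow> (\<Sum>j\<in>Y. B i j * x j) = mv V B x i" for i
    by (rule sum_supp[OF assms])
  then show ?thesis unfolding null_space_def by auto
qed

lemma img:
  assumes XV: "X \<subseteq> V" and YV: "Y \<subseteq> V"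
  shows "swp V A Z ` null_space A X Y = null_space (ppt V A Z) ((X - Z) \<union> (Z - Y)) ((Y - Z) \<union> (Z - X))"
proof -
  have Y'V: "(Y - Z) \<union> (Z - X) \<subseteq> V" using YV ZV by auto
  show ?thesis
  proof
    show "swp V A Z ` null_space A X Y \<subseteq> null_space (ppt V A Z) ((X - Z) \<union> (Z - Y)) ((Y - Z) \<union> (Z - X))"
    proof
      fix y assume "y \<in> swp V A Z ` null_space A X Y"
      then obtain x where x: "x \<in> null_space A X Y" and y: "y = swp V A Z x" by blast
      have supp: "\<forall>j. j \<notin> Y \<longrightarrow> x j = 0" and cond: "\<forall>i\<in>X. mv V A x i = 0"
        using x ns_iff[OF YV, of x A X] by auto
      have xV: "\<forall>j. j \<notin> V \<longrightarrow> x j = 0" using supp YV by auto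
      have s1: "\<forall>j. j \<notin> (Y - Z) \<union> (Z - X) \<longrightarrow> y j = 0"
        using supp cond unfolding y swp_def by auto
      have s2: "\<forall>i\<in>(X - Z) \<union> (Z - Y). mv V (ppt V A Z) y i = 0"
      proof
        fix i assume i: "i \<in> (X - Z) \<union> (Z - Y)"
        then have iV: "i \<in> V" using XV ZV by auto
        show "mv V (ppt V A Z) y i = 0"
          unfolding y key1[OF xV iV] using i supp cond by auto
      qed
      show "y \<in> null_space (ppt V A Z) ((X - Z) \<union> (Z - Y)) ((Y - Z) \<union> (Z - X))"
        using s1 s2 ns_iff[OF Y'V] by blast
    qed
  next
    show "null_space (ppt V A Z) ((X - Z) \<union> (Z - Y)) ((Y - Z) \<union> (Z - X)) \<subseteq> swp V A Z ` null_space A X Y"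
    proof
      fix x' assume x': "x' \<in> null_space (ppt V A Z) ((X - Z) \<union> (Z - Y)) ((Y - Z) \<union> (Z - X))"
      have supp: "\<forall>j. j \<notin> (Y - Z) \<union> (Z - X) \<longrightarrow> x' j = 0"
        and cond: "\<forall>i\<in>(X - Z) \<union> (Z - Y). mv V (ppt V A Z) x' i = 0"
        using x' ns_iff[OF Y'V, of x' "ppt V A Z" "(X - Z) \<union> (Z - Y)"] by auto
      have x'V: "\<forall>j. j \<notin> V \<longrightarrow> x' j = 0" using supp Y'V by auto
      define x where "x = (\<lambda>j. if j \<in> Z then mv V (ppt V A Z) x' j else x' j)"
      have k2: "i \<in> Z \<Longrightarrow> mv V A x i = x' i" for i
        unfolding x_def by (rule key2[OF x'V])
      have sw: "swp V A Z x = x'"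
      proof
        fix j show "swp V A Z x j = x' j"
        proof (cases "j \<in> Z")
          case True
          then have "swp V A Z x j = mv V A x j" by (simp add: swp_def)
          then show ?thesis using k2[OF True] by simp
        next
          case False
          then show ?thesis by (simp add: swp_def x_def)
        qed
      qed
      have xV: "\<forall>j. j \<notin> V \<longrightarrow> x j = 0" using x'V ZV unfolding x_def by auto
      have s1: "\<forall>j. j \<notin> Y \<longrightarrow> x j = 0"
        using supp cond unfolding x_def by auto
      have s2: "\<forall>i\<in>X. mv V A x i = 0"
      proof
        fix i assume i: "i \<in> X"
        then have iV: "i \<in> V" using XV by auto
        show "mv V A x i = 0"
        proof (cases "i \<in> Z")
          case True
          then show ?thesis using k2 supp i by auto
        next
          case False
          have "mv V A x i = mv V (ppt V A Z) (swp V A Z x) i"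
            using key1[OF xV iV] False by simp
          then show ?thesis using sw cond i False by auto
        qed
      qed
      have "x \<in> null_space A X Y" using s1 s2 ns_iff[OF YV] by blast
      then show "x' \<in> swp V A Z ` null_space A X Y" using sw by blast
    qed
  qed
qed

lemma swp_linear: "Vector_Spaces.linear fscale fscale (swp V A Z)"
  unfolding Vector_Spaces.linear_iff
proof (intro conjI allI)
  show "vector_space (fscale :: 'a \<Rightarrow> ('v \<Rightarrow> 'a) \<Rightarrow> _)" by (rule vector_space_fscale)
  then show "vector_space (fscale :: 'a \<Rightarrow> ('v \<Rightarrow> 'a) \<Rightarrow> _)" .
  fix x y :: "'v \<Rightarrow> 'a"
  show "swp V A Z (x + y) = swp V A Z x + swp V A Z y"
    by (auto simp: swp_def mv_def fun_eq_iff sum.distrib distrib_left)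
next
  fix c :: 'a and x :: "'v \<Rightarrow> 'a"
  show "swp V A Z (fscale c x) = fscale c (swp V A Z x)"
    by (auto simp: swp_def mv_def fun_eq_iff fscale_def sum_distrib_left mult_ac)
qed

lemma swp_inj: "inj_on (swp V A Z) {x. \<forall>j. j \<notin> V \<longrightarrow> x j = 0}"
proof (rule inj_onI)
  fix x y assume x: "x \<in> {x. \<forall>j. j \<notin> V \<longrightarrow> x j = 0}" and y: "y \<in> {x. \<forall>j. j \<notin> V \<longrightarrow> x j = 0}"
    and e: "swp V A Z x = swp V A Z y"
  show "x = y"
  proof
    fix j show "x j = y j"
    proof (cases "j \<in> Z")
      case True
      then have jV: "j \<in> V" using ZV by auto
      have "x j = mv V (ppt V A Z) (swp V A Z x) j" using key1[of x j] x jV True by simp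
      also have "\<dots> = mv V (ppt V A Z) (swp V A Z y) j" using e by simp
      also have "\<dots> = y j" using key1[of y j] y jV True by simp
      finally show ?thesis .
    next
      case False
      then show ?thesis using fun_cong[OF e, of j] by (simp add: swp_def)
    qed
  qed
qed

end

lemma dim_image_eq_gen:
  fixes f :: "('v \<Rightarrow> 'a::field) \<Rightarrow> ('v \<Rightarrow> 'a)"
  assumes lin: "Vector_Spaces.linear fscale fscale f" and fi: "inj_on f (module.span fscale S)"
  shows "vector_space.dim fscale (f ` S) = vector_space.dim fscale S"
proof -
  interpret vs: vector_space "fscale :: 'a \<Rightarrow> ('v \<Rightarrow> 'a) \<Rightarrow> _" by (rule vector_space_fscale)
  interpret lf: Vector_Spaces.linear fscale fscale f by (rule lin)
  obtain B where B: "B \<subseteq> S" "vs.independent B" "S \<subseteq> vs.span B" "card B = vs.dim S"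
    using vs.basis_exists[of S] by auto
  then have "vs.span S = vs.span B"
    using vs.span_mono[of B S] vs.span_mono[of S "vs.span B"] vs.span_span[of B] by auto
  moreover have "card (f ` B) = card B"
    using fi card_image[of f B] inj_on_subset[of f "vs.span S" B] B vs.span_superset by auto
  moreover have "(f ` B) \<subseteq> (f ` S)"
    using B by auto
  ultimately show ?thesis
    by (metis B(2) B(4) fi lf.dependent_inj_imageD lf.span_image vs.dim_eq_card_independent vs.dim_span)
qed

lemma span_sub:
  fixes B :: "'v \<Rightarrow> 'v \<Rightarrow> 'a::field"
  assumes "Y \<subseteq> V"
  shows "module.span fscale (null_space B X Y) \<subseteq> {x. \<forall>j. j \<notin> V \<longrightarrow> x j = 0}"
proof -
  interpret vs: vector_space "fscale :: 'a \<Rightarrow> ('v \<Rightarrow> 'a) \<Rightarrow> _" by (rule vector_space_fscale)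
  show ?thesis
  proof (rule vs.span_minimal)
    show "null_space B X Y \<subseteq> {x. \<forall>j. j \<notin> V \<longrightarrow> x j = 0}"
      using assms unfolding null_space_def by auto
    show "vs.subspace {x::'v\<Rightarrow>'a. \<forall>j. j \<notin> V \<longrightarrow> x j = 0}"
      unfolding vs.subspace_def by (auto simp: fscale_def)
  qed
qed

theorem corollary2:
  fixes V Z :: "'v set" and A :: "'v \<Rightarrow> 'v \<Rightarrow> 'a::field"
  assumes "finite V" and "Z \<subseteq> V" and "nonsingular_on Z A"
  shows "nullity_poly V A = nullity_poly V (ppt V A Z)"
proof -
  have inv: "is_inverse_on Z A (inverse_on Z A)"
    using assms(3) unfolding nonsingular_on_def inverse_on_def by (rule someI_ex)
  define \<sigma> :: "'v set \<times> 'v set \<Rightarrow> 'v set \<times> 'v set"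
    where "\<sigma> = (\<lambda>(X, Y). ((X - Z) \<union> (Z - Y), (Y - Z) \<union> (Z - X)))"
  have nul: "nullity (ppt V A Z) ((X - Z) \<union> (Z - Y)) ((Y - Z) \<union> (Z - X)) = nullity A X Y"
    if XV: "X \<subseteq> V" and YV: "Y \<subseteq> V" for X Y
  proof -
    have "nullity (ppt V A Z) ((X - Z) \<union> (Z - Y)) ((Y - Z) \<union> (Z - X))
        = vector_space.dim fscale (swp V A Z ` null_space A X Y)"
      unfolding nullity_def img[OF assms(1,2) inv XV YV] ..
    also have "\<dots> = vector_space.dim fscale (null_space A X Y)"
      by (rule dim_image_eq_gen[OF swp_linear[OF assms(1,2) inv]])
         (rule inj_on_subset[OF swp_inj[OF assms(1,2) inv] span_sub[OF YV]])
    finally show ?thesis unfolding nullity_def .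
  qed
  have eA: "nullity_poly V A = (\<Sum>(X, Y)\<in>Pow V \<times> Pow V. monom 1 (nullity A X Y))"
    unfolding nullity_poly_def by (rule sum.cartesian_product)
  have eP: "nullity_poly V (ppt V A Z) = (\<Sum>(X, Y)\<in>Pow V \<times> Pow V. monom 1 (nullity (ppt V A Z) X Y))"
    unfolding nullity_poly_def by (rule sum.cartesian_product)
  show ?thesis
    unfolding eA eP
  proof (rule sum.reindex_bij_witness[where i=\<sigma> and j=\<sigma>])
    fix a assume "a \<in> Pow V \<times> Pow V"
    then obtain X Y where a: "a = (X, Y)" "X \<subseteq> V" "Y \<subseteq> V" by auto
    show "\<sigma> (\<sigma> a) = a" using a by (auto simp: \<sigma>_def)
    show "\<sigma> a \<in> Pow V \<times> Pow V" using a assms(2) by (auto simp: \<sigma>_def)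
    show "(case \<sigma> a of (X, Y) \<Rightarrow> monom 1 (nullity (ppt V A Z) X Y)) = (case a of (X, Y) \<Rightarrow> monom 1 (nullity A X Y))"
      using a nul[OF a(2,3)] by (simp add: \<sigma>_def)
  next
    fix a assume "a \<in> Pow V \<times> Pow V"
    then obtain X Y where a: "a = (X, Y)" "X \<subseteq> V" "Y \<subseteq> V" by auto
    show "\<sigma> (\<sigma> a) = a" using a by (auto simp: \<sigma>_def)
    show "\<sigma> a \<in> Pow V \<times> Pow V" using a assms(2) by (auto simp: \<sigma>_def)
  qed
qed

end
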